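(* Let $$B= \begin{pmatrix} 1& 2& 2\\ 2&1& 2\\ 2&2& 3 \end{pmatrix}.$$ For every positive integer $n$, writing $B^n(3,4,5)^\top=(x,y,z)^\top$, the inradius $r_n$ of the triangle with side lengths $x,y,z$ is $$r_n=\frac{(3+2\sqrt{2})^{n+1}-(3-2\sqrt{2})^{n+1}}{4\sqrt{2}}.$$
   Context: Triples are regarded as row vectors and $\top$ denotes transpose. The triple $B^n(3,4,5)^\top$ is a primitive Pythagorean triple (positive integers $x,y,z$ with $x^2+y^2=z^2$), so the triangle is a right triangle with hypotenuse $z$. *)

theory Defs
  imports "HOL-Analysis.Analysis"
begin

definition Bmat :: "int ^ 3 ^ 3" where
  "Bmat = vector [vector [1, 2, 2], vector [2, 1, 2], vector [2, 2, 3]]"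

fun mpow :: "'a::comm_ring_1 ^ 'n ^ 'n \<Rightarrow> nat \<Rightarrow> 'a ^ 'n ^ 'n" where
  "mpow A 0 = mat 1"
| "mpow A (Suc n) = A ** mpow A n"

definition inradius :: "real \<Rightarrow> real \<Rightarrow> real \<Rightarrow> real" where
  "inradius a b c = (let s = (a + b + c) / 2 in
      sqrt (s * (s - a) * (s - b) * (s - c)) / s)"

end

theory Submission
  imports Defs
begin

lemma B1: "(Bmat *v u) $ 1 = u$1 + 2*u$2 + 2*u$3"
  by (simp add: matrix_vector_mult_def sum_3 Bmat_def)
lemma B2: "(Bmat *v u) $ 2 = 2*u$1 + u$2 + 2*u$3"
  by (simp add: matrix_vector_mult_def sum_3 Bmat_def)
lemma B3: "(Bmat *v u) $ 3 = 2*u$1 + 2*u$2 + 3*u$3"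
  by (simp add: matrix_vector_mult_def sum_3 Bmat_def)
lemma mp: "mpow A (Suc n) *v w = A *v (mpow A n *v w)"
  by (simp add: matrix_vector_mul_assoc)

definition Dn :: "nat \<Rightarrow> real" where
  "Dn n = ((3 + 2 * sqrt 2) ^ (n + 1) - (3 - 2 * sqrt 2) ^ (n + 1)) / (2 * sqrt 2)"

lemma Dn_rec: "Dn (Suc (Suc n)) = 6 * Dn (Suc n) - Dn n"
proof -
  have s: "sqrt 2 * sqrt 2 = 2" by simp
  have a: "(3 + 2 * sqrt 2) ^ 2 = 6 * (3 + 2 * sqrt 2) - 1"
    by (simp add: power2_eq_square algebra_simps s)
  have b: "(3 - 2 * sqrt 2) ^ 2 = 6 * (3 - 2 * sqrt 2) - 1"
    by (simp add: power2_eq_square algebra_simps s)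
  have e3: "n + 3 = (n+1) + 2" by simp
  have "(3 + 2 * sqrt 2) ^ (n + 3) = (3 + 2 * sqrt 2) ^ (n+1) * (3 + 2 * sqrt 2) ^ 2"
    by (simp only: e3 power_add)
  also have "\<dots> = 6 * (3 + 2 * sqrt 2) ^ (n + 2) - (3 + 2 * sqrt 2) ^ (n+1)"
    by (simp add: a algebra_simps)
  finally have A: "(3 + 2 * sqrt 2) ^ (n + 3) = 6 * (3 + 2 * sqrt 2) ^ (n + 2) - (3 + 2 * sqrt 2) ^ (n+1)" .
  have "(3 - 2 * sqrt 2) ^ (n + 3) = (3 - 2 * sqrt 2) ^ (n+1) * (3 - 2 * sqrt 2) ^ 2"
    by (simp only: e3 power_add)
  also have "\<dots> = 6 * (3 - 2 * sqrt 2) ^ (n + 2) - (3 - 2 * sqrt 2) ^ (n+1)"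
    by (simp add: b algebra_simps)
  finally have B: "(3 - 2 * sqrt 2) ^ (n + 3) = 6 * (3 - 2 * sqrt 2) ^ (n + 2) - (3 - 2 * sqrt 2) ^ (n+1)" .
  have e1: "Suc (Suc n) + 1 = n + 3" "Suc n + 1 = n + 2" by simp_all
  have g: "\<And>P1 P2 Q1 Q2 c::real. (6*P2 - P1 - (6*Q2 - Q1))/c = 6*((P2-Q2)/c) - (P1-Q1)/c"
    by (simp add: diff_divide_distrib)
  show ?thesis unfolding Dn_def e1 A B by (rule g)
qed

lemma Dn0: "Dn 0 = 2" and Dn1: "Dn (Suc 0) = 12"
proof -
  have s: "sqrt 2 * sqrt 2 = 2" by simp
  show "Dn 0 = 2" by (simp add: Dn_def)
  have "(3 + 2 * sqrt 2) * (3 + 2 * sqrt 2) - (3 - 2 * sqrt 2) * (3 - 2 * sqrt 2) = 24 * sqrt 2"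
    by (simp add: algebra_simps)
  then show "Dn (Suc 0) = 12" by (simp add: Dn_def power2_eq_square)
qed

lemma inv:
  fixes n :: nat
  defines "v \<equiv> mpow Bmat n *v (vector [3, 4, 5] :: int ^ 3)"
  shows "v$1 > 0 \<and> v$2 > 0 \<and> v$3 > 0 \<and> (v$1)^2 + (v$2)^2 = (v$3)^2 \<and>
    real_of_int (v$1 + v$2 - v$3) = Dn n \<and> real_of_int (v$1 + v$2 + v$3) = Dn (Suc n)"
  unfolding v_def
proof (induction n)
  case 0
  then show ?case by (simp add: Dn0 Dn1)
next
  case (Suc n)
  define u where "u = mpow Bmat n *v (vector [3, 4, 5] :: int ^ 3)"
  have IH: "u$1 > 0 \<and> u$2 > 0 \<and> u$3 > 0 \<and> (u$1)^2 + (u$2)^2 = (u$3)^2 \<and>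
    real_of_int (u$1 + u$2 - u$3) = Dn n \<and> real_of_int (u$1 + u$2 + u$3) = Dn (Suc n)"
    using Suc unfolding u_def .
  have d: "real_of_int (u$1 + u$2 + u$3) = Dn (Suc n)" using IH by blast
  have d2: "real_of_int (5*u$1 + 5*u$2 + 7*u$3) = Dn (Suc (Suc n))"
  proof -
    have "real_of_int (5*u$1 + 5*u$2 + 7*u$3) = 6 * real_of_int (u$1 + u$2 + u$3) - real_of_int (u$1 + u$2 - u$3)"
      by simp
    then show ?thesis using IH Dn_rec by simp
  qed
  have sq: "(u$1 + 2*u$2 + 2*u$3)^2 + (2*u$1 + u$2 + 2*u$3)^2 = (2*u$1 + 2*u$2 + 3*u$3)^2"
  proof -
    have "(u$1)^2 + (u$2)^2 = (u$3)^2" using IH by blast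
    then show ?thesis by (simp add: power2_eq_square algebra_simps)
  qed
  show ?case unfolding mp u_def[symmetric] B1 B2 B3
    using IH d d2 sq by (simp add: algebra_simps)
qed

lemma inradius_right:
  fixes x y z :: real
  assumes "x > 0" "y > 0" "z > 0" "x^2 + y^2 = z^2"
  shows "inradius x y z = (x + y - z) / 2"
proof -
  let ?s = "(x + y + z) / 2"
  have "?s * (?s - x) * (?s - y) * (?s - z) = ((x + y)^2 - z^2) * (z^2 - (x - y)^2) / 16"
    unfolding power2_eq_square by (simp add: divide_simps) algebra
  also have "\<dots> = (2*x*y) * (2*x*y) / 16"
  proof -
    have "(x + y)^2 - z^2 = 2*x*y" "z^2 - (x - y)^2 = 2*x*y" using assms(4)
      by (simp_all add: power2_eq_square algebra_simps)
    then show ?thesis by simp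
  qed
  also have "\<dots> = (x*y/2)^2" by (simp add: power2_eq_square)
  finally have h: "sqrt (?s * (?s - x) * (?s - y) * (?s - z)) = x*y/2"
    using assms by simp
  have "x*y/2 / ?s = (x + y - z) / 2"
  proof -
    have "(x + y - z) * (x + y + z) = 2 * x * y" using assms(4)
      by (simp add: power2_eq_square algebra_simps)
    then show ?thesis using assms by (simp add: field_simps)
  qed
  then show ?thesis unfolding inradius_def Let_def h .
qed

theorem mainTheorem4:
  fixes n :: nat
  assumes "n \<ge> 1"
  defines "v \<equiv> mpow Bmat n *v (vector [3, 4, 5] :: int ^ 3)"
  shows "inradius (of_int (v $ 1)) (of_int (v $ 2)) (of_int (v $ 3)) =
    ((3 + 2 * sqrt 2) ^ (n + 1) - (3 - 2 * sqrt 2) ^ (n + 1)) / (4 * sqrt 2)"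
proof -
  have I: "v$1 > 0 \<and> v$2 > 0 \<and> v$3 > 0 \<and> (v$1)^2 + (v$2)^2 = (v$3)^2 \<and>
    real_of_int (v$1 + v$2 - v$3) = Dn n \<and> real_of_int (v$1 + v$2 + v$3) = Dn (Suc n)"
    unfolding v_def by (rule inv)
  have pyth: "(real_of_int (v$1))^2 + (real_of_int (v$2))^2 = (real_of_int (v$3))^2"
    using I by (metis of_int_add of_int_power)
  have "inradius (of_int (v $ 1)) (of_int (v $ 2)) (of_int (v $ 3)) = Dn n / 2"
    using inradius_right[OF _ _ _ pyth] I by simp
  then show ?thesis by (simp add: Dn_def)
qed

end
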